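(* Let $C^0\subset\mathcal{L}^0$ be a set of pairwise disjoint lines on ${\rm F}_5$ with $\#C^0=5$. Then $\#\varphi_{5,+}(C^0)\ge3$ or $\#\varphi_{5,-}(C^0)\ge3$.
   Context: ${\rm F}_5\subset\mathbb{P}^3(\mathbb{C})$ is the surface $x^5-y^5-z^5+w^5=0$. Let $\eta$ be a primitive 5th root of unity. For $k,i\in\{0,\dots,4\}$ let $L^0_{k,i}$ be the line $\{y=\eta^i x,\ w=\eta^k z\}$ and $\mathcal{L}^0=\{L^0_{k,i}\}_{k,i}$. Define $\varphi_{5,\pm}(k,i)=r_5(i\pm k)$, where $r_5$ is the remainder modulo 5, and for a set $X$ of lines $L^0_{k,i}$ let $\varphi_{5,\pm}(X)$ be the set of values $\varphi_{5,\pm}(k,i)$ over $L^0_{k,i}\in X$. *)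

theory Defs
  imports Complex_Main
begin

text \<open>Points of P^3(C) are represented by their nonzero affine representatives
(x,y,z,w) in C^4; a projective line is represented by its (punctured) cone.
Two projective lines are disjoint iff their punctured cones are disjoint.\<close>

definition F5 :: "(complex \<times> complex \<times> complex \<times> complex) set" where
  "F5 = {(x,y,z,w). (x,y,z,w) \<noteq> (0,0,0,0) \<and> x^5 - y^5 - z^5 + w^5 = 0}"

definition L0 :: "complex \<Rightarrow> nat \<Rightarrow> nat \<Rightarrow> (complex \<times> complex \<times> complex \<times> complex) set" where
  "L0 \<eta> k i = {(x,y,z,w). (x,y,z,w) \<noteq> (0,0,0,0) \<and> y = \<eta>^i * x \<and> w = \<eta>^k * z}"

definition L0_idx :: "(nat \<times> nat) set" where
  "L0_idx = {0..4} \<times> {0..4}"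

definition phi5_plus :: "nat \<times> nat \<Rightarrow> int" where
  "phi5_plus = (\<lambda>(k,i). (int i + int k) mod 5)"

definition phi5_minus :: "nat \<times> nat \<Rightarrow> int" where
  "phi5_minus = (\<lambda>(k,i). (int i - int k) mod 5)"

end

theory Submission
  imports Defs
begin
lemma five_cases: "(a::nat) < 5 \<Longrightarrow> (a = 0 \<Longrightarrow> P) \<Longrightarrow> (a = 1 \<Longrightarrow> P) \<Longrightarrow> (a = 2 \<Longrightarrow> P) \<Longrightarrow> (a = 3 \<Longrightarrow> P) \<Longrightarrow> (a = 4 \<Longrightarrow> P) \<Longrightarrow> P"
proof -
  assume "a < 5" then have "a = 0 \<or> a = 1 \<or> a = 2 \<or> a = 3 \<or> a = 4" by presburger
  then show "(a = 0 \<Longrightarrow> P) \<Longrightarrow> (a = 1 \<Longrightarrow> P) \<Longrightarrow> (a = 2 \<Longrightarrow> P) \<Longrightarrow> (a = 3 \<Longrightarrow> P) \<Longrightarrow> (a = 4 \<Longrightarrow> P) \<Longrightarrow> P" by blast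
qed
lemma key:
  fixes a b c d e :: nat
  assumes "a<5" "b<5" "c<5" "d<5" "e<5" "distinct [a,b,c,d,e]"
  shows "3 \<le> card (phi5_plus ` {(0,a),(1,b),(2,c),(3,d),(4,e)}) \<or> 3 \<le> card (phi5_minus ` {(0,a),(1,b),(2,c),(3,d),(4,e)})"
proof -
  have "distinct [a,b,c,d,e] \<longrightarrow> ?thesis"
  apply (rule five_cases[OF assms(1)]; simp;
         rule five_cases[OF assms(2)]; simp;
         rule five_cases[OF assms(3)]; simp;
         rule five_cases[OF assms(4)]; simp;
         rule five_cases[OF assms(5)]; simp add: phi5_plus_def phi5_minus_def card_insert_if)
  done
  then show ?thesis using assms(6) by blast
qed

theorem lemma3p3:
  fixes \<eta> :: complex and C :: "(nat \<times> nat) set"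
  assumes eta: "\<eta> ^ 5 = 1" "\<eta> \<noteq> 1"
    and sub: "C \<subseteq> L0_idx"
    and disj: "\<forall>p\<in>C. \<forall>q\<in>C. p \<noteq> q \<longrightarrow>
                 L0 \<eta> (fst p) (snd p) \<inter> L0 \<eta> (fst q) (snd q) = {}"
    and card: "card C = 5"
  shows "card (phi5_plus ` C) \<ge> 3 \<or> card (phi5_minus ` C) \<ge> 3"
proof -
  have fin: "finite C" using card by (metis card.infinite zero_neq_numeral)
  have fstd: "fst p \<noteq> fst q" if "p \<in> C" "q \<in> C" "p \<noteq> q" for p q
  proof
    assume h: "fst p = fst q"
    have "(0,0,1,\<eta>^fst p) \<in> L0 \<eta> (fst p) (snd p) \<inter> L0 \<eta> (fst q) (snd q)"
      using h by (simp add: L0_def)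
    then show False using disj that by blast
  qed
  have sndd: "snd p \<noteq> snd q" if "p \<in> C" "q \<in> C" "p \<noteq> q" for p q
  proof
    assume h: "snd p = snd q"
    have "(1,\<eta>^snd p,0,0) \<in> L0 \<eta> (fst p) (snd p) \<inter> L0 \<eta> (fst q) (snd q)"
      using h by (simp add: L0_def)
    then show False using disj that by blast
  qed
  have injf: "inj_on fst C" using fstd by (meson inj_onI)
  have injs: "inj_on snd C" using sndd by (meson inj_onI)
  have bnd: "fst p < 5 \<and> snd p < 5" if "p \<in> C" for p
    using sub that by (auto simp: L0_idx_def)
  have "fst ` C \<subseteq> {0..<5}" using bnd by auto
  moreover have "card (fst ` C) = card {0..<5::nat}" using card_image[OF injf] card by simp
  ultimately have fC: "fst ` C = {0..<5}" by (simp add: card_subset_eq)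
  have ex: "\<exists>i. (k,i) \<in> C" if "k < 5" for k
  proof -
    have "k \<in> fst ` C" using fC that by simp
    then show ?thesis by force
  qed
  obtain a where a: "(0,a) \<in> C" using ex[of 0] by auto
  obtain b where b: "(1,b) \<in> C" using ex[of 1] by auto
  obtain c where c: "(2,c) \<in> C" using ex[of 2] by auto
  obtain d where d: "(3,d) \<in> C" using ex[of 3] by auto
  obtain e where e: "(4,e) \<in> C" using ex[of 4] by auto
  let ?S = "{(0,a),(1,b),(2,c),(3,d),(4::nat,e)}"
  have SC: "?S \<subseteq> C" using a b c d e by auto
  have "card ?S = 5" by simp
  then have SeqC: "?S = C" using SC card fin by (simp add: card_subset_eq)
  have dist: "distinct [a,b,c,d,e]"
    using sndd[OF a b] sndd[OF a c] sndd[OF a d] sndd[OF a e] sndd[OF b c] sndd[OF b d]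
      sndd[OF b e] sndd[OF c d] sndd[OF c e] sndd[OF d e] by auto
  have "a < 5" "b < 5" "c < 5" "d < 5" "e < 5"
    using bnd[OF a] bnd[OF b] bnd[OF c] bnd[OF d] bnd[OF e] by auto
  from key[OF this dist] show ?thesis unfolding SeqC .
qed
end
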